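(* Let $\Lambda$ be a torsion-free group generated by elements $f,g,h$ with $[f,h]\ne1$ and $[f,g]=1$, and let $G=\langle g,h\rangle\le\Lambda$. Suppose $G$ is non-trivial, $g\ne1$, $h\ne1$, and that if $G$ is cyclic then $g=h^n$ for some $n\in\mathbb{Z}$ with $|n|>1$. Then there exists a finitely generated torsion-free group $\Gamma$ such that: (1) $G$ embeds as a subgroup of $\Gamma$ (we identify $g,h$ with their images); (2) there exist distinct elements $a,b\in\Gamma\setminus\{1\}$ centralizing $g$; (3) the commutator $[a,[b,h]]$ is non-trivial and centralizes $g$.
   Context: $[x,y]$ denotes the group commutator. *)

theory Defs
  imports "HOL-Algebra.Algebra"
begin

definition comm :: "('a, 'b) monoid_scheme \<Rightarrow> 'a \<Rightarrow> 'a \<Rightarrow> 'a" where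
  "comm G x y = inv\<^bsub>G\<^esub> x \<otimes>\<^bsub>G\<^esub> inv\<^bsub>G\<^esub> y \<otimes>\<^bsub>G\<^esub> x \<otimes>\<^bsub>G\<^esub> y"

definition torsion_free :: "('a, 'b) monoid_scheme \<Rightarrow> bool" where
  "torsion_free G \<longleftrightarrow>
     (\<forall>x\<in>carrier G. x \<noteq> \<one>\<^bsub>G\<^esub> \<longrightarrow> (\<forall>n::nat. n > 0 \<longrightarrow> x [^]\<^bsub>G\<^esub> n \<noteq> \<one>\<^bsub>G\<^esub>))"

definition fin_gen :: "('a, 'b) monoid_scheme \<Rightarrow> bool" where
  "fin_gen G \<longleftrightarrow> (\<exists>S. finite S \<and> S \<subseteq> carrier G \<and> generate G S = carrier G)"

definition is_cyclic :: "('a, 'b) monoid_scheme \<Rightarrow> bool" where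
  "is_cyclic G \<longleftrightarrow> (\<exists>x\<in>carrier G. generate G {x} = carrier G)"

end

theory Submission
  imports Defs "HOL-Library.Countable_Set"
begin

definition Wr :: "('h,'c) monoid_scheme \<Rightarrow> 'y set \<Rightarrow> ('h \<Rightarrow> 'y \<Rightarrow> 'y) \<Rightarrow> (('y \<Rightarrow> int) \<times> 'h) monoid" where
 "Wr H Y act = \<lparr>carrier = {(m,x). x \<in> carrier H \<and> (\<forall>y. y \<notin> Y \<longrightarrow> m y = 0)},
   monoid.mult = (\<lambda>(m,x) (m',x'). (\<lambda>y. if y \<in> Y then m y + m' (act (inv\<^bsub>H\<^esub> x) y) else 0, x \<otimes>\<^bsub>H\<^esub> x')),
   one = (\<lambda>y. 0, \<one>\<^bsub>H\<^esub>)\<rparr>"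

definition wi :: "'h \<Rightarrow> ('y \<Rightarrow> int) \<times> 'h" where "wi x = (\<lambda>y. 0, x)"

locale wr = group +
  fixes Y :: "'y set" and act :: "'a \<Rightarrow> 'y \<Rightarrow> 'y"
  assumes act_closed: "x \<in> carrier G \<Longrightarrow> y \<in> Y \<Longrightarrow> act x y \<in> Y"
    and act_one: "y \<in> Y \<Longrightarrow> act \<one> y = y"
    and act_mult: "x \<in> carrier G \<Longrightarrow> z \<in> carrier G \<Longrightarrow> y \<in> Y \<Longrightarrow> act (x \<otimes> z) y = act x (act z y)"
begin

abbreviation "W \<equiv> Wr G Y act"

lemma W_carrier: "(m,x) \<in> carrier W \<longleftrightarrow> x \<in> carrier G \<and> (\<forall>y. y \<notin> Y \<longrightarrow> m y = 0)"
  by (simp add: Wr_def)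

lemma W_mult: "(m,x) \<otimes>\<^bsub>W\<^esub> (m',x') = (\<lambda>y. if y \<in> Y then m y + m' (act (inv x) y) else 0, x \<otimes> x')"
  by (simp add: Wr_def)

lemma W_one: "\<one>\<^bsub>W\<^esub> = (\<lambda>y. 0, \<one>)"
  by (simp add: Wr_def)

lemma W_assoc:
  assumes "x \<in> carrier G" "x' \<in> carrier G" "x'' \<in> carrier G"
  shows "(m,x) \<otimes>\<^bsub>W\<^esub> (m',x') \<otimes>\<^bsub>W\<^esub> (m'',x'') = (m,x) \<otimes>\<^bsub>W\<^esub> ((m',x') \<otimes>\<^bsub>W\<^esub> (m'',x''))"
proof -
  have "\<And>y. y \<in> Y \<Longrightarrow> act (inv (x \<otimes> x')) y = act (inv x') (act (inv x) y)"
    using assms by (simp add: inv_mult_group act_mult)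
  moreover have "\<And>y. y \<in> Y \<Longrightarrow> act (inv x) y \<in> Y" using assms act_closed by simp
  ultimately show ?thesis using assms by (simp add: W_mult m_assoc fun_eq_iff)
qed


lemma W_closed: "p \<in> carrier W \<Longrightarrow> q \<in> carrier W \<Longrightarrow> p \<otimes>\<^bsub>W\<^esub> q \<in> carrier W"
  by (cases p; cases q) (simp add: W_carrier W_mult)

lemma W_invl:
  assumes "(m,x) \<in> carrier W"
  shows "(\<lambda>y. if y \<in> Y then - m (act x y) else 0, inv x) \<in> carrier W"
    and "(\<lambda>y. if y \<in> Y then - m (act x y) else 0, inv x) \<otimes>\<^bsub>W\<^esub> (m,x) = \<one>\<^bsub>W\<^esub>"
proof -
  have x: "x \<in> carrier G" using assms by (simp add: W_carrier)
  show "(\<lambda>y. if y \<in> Y then - m (act x y) else 0, inv x) \<in> carrier W"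
    using x by (simp add: W_carrier)
  have "\<And>y. y \<in> Y \<Longrightarrow> act x y \<in> Y" using x act_closed by simp
  then show "(\<lambda>y. if y \<in> Y then - m (act x y) else 0, inv x) \<otimes>\<^bsub>W\<^esub> (m,x) = \<one>\<^bsub>W\<^esub>"
    using x by (simp add: W_mult W_one fun_eq_iff)
qed

lemma W_group: "group W"
proof (rule groupI)
  fix p q assume "p \<in> carrier W" "q \<in> carrier W"
  then show "p \<otimes>\<^bsub>W\<^esub> q \<in> carrier W" by (rule W_closed)
next
  show "\<one>\<^bsub>W\<^esub> \<in> carrier W" by (simp add: W_one W_carrier)
next
  fix p q r assume "p \<in> carrier W" "q \<in> carrier W" "r \<in> carrier W"
  then show "p \<otimes>\<^bsub>W\<^esub> q \<otimes>\<^bsub>W\<^esub> r = p \<otimes>\<^bsub>W\<^esub> (q \<otimes>\<^bsub>W\<^esub> r)"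
    by (cases p; cases q; cases r) (simp add: W_carrier W_assoc)
next
  fix p assume "p \<in> carrier W"
  then show "\<one>\<^bsub>W\<^esub> \<otimes>\<^bsub>W\<^esub> p = p"
    by (cases p) (simp add: W_carrier W_mult W_one act_one fun_eq_iff)
next
  fix p assume p: "p \<in> carrier W"
  obtain m x where [simp]: "p = (m,x)" by (cases p)
  have pm: "(m,x) \<in> carrier W" using p by simp
  show "\<exists>q\<in>carrier W. q \<otimes>\<^bsub>W\<^esub> p = \<one>\<^bsub>W\<^esub>" using W_invl[OF pm] by auto
qed

lemma W_inv: assumes "(m,x) \<in> carrier W"
  shows "inv\<^bsub>W\<^esub> (m,x) = (\<lambda>y. if y \<in> Y then - m (act x y) else 0, inv x)"
proof -
  interpret W: group W by (rule W_group)
  show ?thesis using W.inv_equality[OF W_invl(2)[OF assms] assms W_invl(1)[OF assms]] .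
qed

lemma W_pow_snd: "p \<in> carrier W \<Longrightarrow> snd (p [^]\<^bsub>W\<^esub> (n::nat)) = snd p [^] n"
proof (induction n)
  case 0 then show ?case by (simp add: W_one)
next
  case (Suc n)
  interpret W: group W by (rule W_group)
  obtain m x where p: "p = (m,x)" by (cases p)
  obtain m' x' where q: "(m,x) [^]\<^bsub>W\<^esub> n = (m',x')" by (cases "(m,x) [^]\<^bsub>W\<^esub> n")
  show ?case using Suc by (simp add: p q W_mult)
qed

lemma W_pow_one: "(m, \<one>) \<in> carrier W \<Longrightarrow> (m, \<one>) [^]\<^bsub>W\<^esub> (n::nat) = (\<lambda>y. int n * m y, \<one>)"
proof (induction n)
  case 0 then show ?case by (simp add: W_one)
next
  case (Suc n)
  then show ?case
    by (simp add: W_mult W_carrier act_one algebra_simps fun_eq_iff)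
qed

lemma W_torsion_free: assumes "torsion_free G" shows "torsion_free W"
  unfolding torsion_free_def
proof (intro ballI impI allI)
  fix p and n :: nat assume p: "p \<in> carrier W" and p1: "p \<noteq> \<one>\<^bsub>W\<^esub>" and n: "n > 0"
  obtain m x where pe: "p = (m,x)" by (cases p)
  show "p [^]\<^bsub>W\<^esub> n \<noteq> \<one>\<^bsub>W\<^esub>"
  proof (cases "x = \<one>")
    case True
    then have "m \<noteq> (\<lambda>y. 0)" using p1 pe by (auto simp: W_one)
    then obtain y where "m y \<noteq> 0" by auto
    then show ?thesis using p pe True n W_pow_one[of m n] by (auto simp add: W_one fun_eq_iff)
  next
    case False
    have "x \<in> carrier G" using p pe by (simp add: W_carrier)
    then have "x [^] n \<noteq> \<one>" using assms False n unfolding torsion_free_def by blast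
    then show ?thesis using W_pow_snd[OF p, of n] pe by (auto simp: W_one)
  qed
qed

lemma W_incl_hom: "(\<lambda>x. (\<lambda>y. 0, x)) \<in> hom G W"
  by (rule homI) (simp_all add: W_carrier W_mult fun_eq_iff)


lemma wi_carrier: "x \<in> carrier G \<Longrightarrow> wi x \<in> carrier W"
  by (simp add: wi_def W_carrier)

lemma wi_mult: "x \<in> carrier G \<Longrightarrow> y \<in> carrier G \<Longrightarrow> wi x \<otimes>\<^bsub>W\<^esub> wi y = wi (x \<otimes> y)"
  by (simp add: wi_def W_mult fun_eq_iff)

lemma wi_inv: "x \<in> carrier G \<Longrightarrow> inv\<^bsub>W\<^esub> (wi x) = wi (inv x)"
proof -
  assume x: "x \<in> carrier G"
  have "(\<lambda>y. 0::int, x) \<in> carrier W" using x by (simp add: W_carrier)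
  from W_inv[OF this] show ?thesis by (simp add: wi_def fun_eq_iff)
qed

lemma wi_comm: "x \<in> carrier G \<Longrightarrow> y \<in> carrier G \<Longrightarrow> comm W (wi x) (wi y) = wi (comm G x y)"
  by (simp add: comm_def wi_inv wi_mult)

lemma wi_hom: "wi \<in> hom G W"
  by (rule homI) (simp_all add: wi_carrier wi_mult)

lemma wi_inj: "inj wi"
  by (rule injI) (simp add: wi_def)

lemma W_comm_base:
  assumes m: "(m, \<one>) \<in> carrier W" and x: "x \<in> carrier G"
  shows "comm W (m, \<one>) (wi x) = (\<lambda>y. if y \<in> Y then m (act x y) - m y else 0, \<one>)"
proof -
  have m0: "\<And>y. y \<notin> Y \<Longrightarrow> m y = 0" using m by (simp add: W_carrier)
  have i1: "inv\<^bsub>W\<^esub> (m, \<one>) = (\<lambda>y. if y \<in> Y then - m y else 0, \<one>)"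
    using m by (simp add: W_inv act_one fun_eq_iff)
  have i2: "inv\<^bsub>W\<^esub> (\<lambda>y. 0, x) = (\<lambda>y. 0, inv x)" using wi_inv[OF x] by (simp add: wi_def)
  have "\<And>y. y \<in> Y \<Longrightarrow> act x y \<in> Y" using x act_closed by simp
  then show ?thesis using x m0
    by (simp add: comm_def i1 i2 W_mult wi_def act_one fun_eq_iff)
qed

lemma W_commute_base:
  assumes m: "(m, \<one>) \<in> carrier W" and x: "x \<in> carrier G"
    and inv: "\<And>y. y \<in> Y \<Longrightarrow> m (act (inv x) y) = m y"
  shows "(m, \<one>) \<otimes>\<^bsub>W\<^esub> wi x = wi x \<otimes>\<^bsub>W\<^esub> (m, \<one>)"
proof -
  have m0: "\<And>y. y \<notin> Y \<Longrightarrow> m y = 0" using m by (simp add: W_carrier)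
  show ?thesis using x m0 inv by (simp add: W_mult wi_def fun_eq_iff)
qed

end

fun gen_lev :: "('a,'b) monoid_scheme \<Rightarrow> 'a set \<Rightarrow> nat \<Rightarrow> 'a set" where
  "gen_lev G T 0 = insert \<one>\<^bsub>G\<^esub> (T \<union> m_inv G ` T)"
| "gen_lev G T (Suc n) = gen_lev G T n \<union> (\<lambda>(a,b). a \<otimes>\<^bsub>G\<^esub> b) ` (gen_lev G T n \<times> gen_lev G T n)"

lemma gen_lev_countable: "countable T \<Longrightarrow> countable (gen_lev G T n)"
  by (induction n) auto

lemma gen_lev_mono: "i \<le> j \<Longrightarrow> gen_lev G T i \<subseteq> gen_lev G T j"
  by (rule lift_Suc_mono_le[of "gen_lev G T"]) auto

lemma generate_countable:
  assumes "countable T" shows "countable (generate G T)"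
proof -
  have "generate G T \<subseteq> (\<Union>n. gen_lev G T n)"
  proof
    fix x assume "x \<in> generate G T"
    then show "x \<in> (\<Union>n. gen_lev G T n)"
    proof (induction rule: generate.induct)
      case one then show ?case by (auto intro: exI[of _ 0])
    next
      case (incl h) then show ?case by (auto intro!: exI[of _ 0])
    next
      case (inv h) then show ?case by (auto intro!: exI[of _ 0])
    next
      case (eng h1 h2)
      then obtain i j where "h1 \<in> gen_lev G T i" "h2 \<in> gen_lev G T j" by auto
      then have "h1 \<in> gen_lev G T (max i j)" "h2 \<in> gen_lev G T (max i j)"
        using gen_lev_mono[of i "max i j" G T] gen_lev_mono[of j "max i j" G T] by auto
      then have "h1 \<otimes>\<^bsub>G\<^esub> h2 \<in> gen_lev G T (Suc (max i j))" by force
      then show ?case by blast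
    qed
  qed
  moreover have "countable (\<Union>n. gen_lev G T n)"
    using gen_lev_countable[OF assms] by auto
  ultimately show ?thesis using countable_subset by blast
qed

lemma nat_transport:
  assumes H: "group H" and c: "countable (carrier H)"
  shows "\<exists>(\<Gamma>::nat monoid) e. group \<Gamma> \<and> e \<in> iso H \<Gamma>"
proof -
  interpret H: group H by (rule H)
  define e where "e = to_nat_on (carrier H)"
  define d where "d = inv_into (carrier H) e"
  have inj: "inj_on e (carrier H)" unfolding e_def using c by (rule inj_on_to_nat_on)
  have de: "\<And>x. x \<in> carrier H \<Longrightarrow> d (e x) = x" unfolding d_def using inj by simp
  have dc: "\<And>u. u \<in> e ` carrier H \<Longrightarrow> d u \<in> carrier H" unfolding d_def by (rule inv_into_into)
  have ed: "\<And>u. u \<in> e ` carrier H \<Longrightarrow> e (d u) = u" unfolding d_def by (rule f_inv_into_f)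
  define \<Gamma> :: "nat monoid" where "\<Gamma> = \<lparr>carrier = e ` carrier H, monoid.mult = (\<lambda>u v. e (d u \<otimes>\<^bsub>H\<^esub> d v)), one = e \<one>\<^bsub>H\<^esub>\<rparr>"
  have gr: "group \<Gamma>"
  proof (rule groupI)
    fix x y assume "x \<in> carrier \<Gamma>" "y \<in> carrier \<Gamma>"
    then show "x \<otimes>\<^bsub>\<Gamma>\<^esub> y \<in> carrier \<Gamma>" by (simp add: \<Gamma>_def dc)
  next
    show "\<one>\<^bsub>\<Gamma>\<^esub> \<in> carrier \<Gamma>" by (simp add: \<Gamma>_def)
  next
    fix x y z assume "x \<in> carrier \<Gamma>" "y \<in> carrier \<Gamma>" "z \<in> carrier \<Gamma>"
    then show "x \<otimes>\<^bsub>\<Gamma>\<^esub> y \<otimes>\<^bsub>\<Gamma>\<^esub> z = x \<otimes>\<^bsub>\<Gamma>\<^esub> (y \<otimes>\<^bsub>\<Gamma>\<^esub> z)"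
      by (simp add: \<Gamma>_def dc de H.m_assoc)
  next
    fix x assume "x \<in> carrier \<Gamma>"
    then show "\<one>\<^bsub>\<Gamma>\<^esub> \<otimes>\<^bsub>\<Gamma>\<^esub> x = x" by (simp add: \<Gamma>_def dc de ed)
  next
    fix x assume x: "x \<in> carrier \<Gamma>"
    have "e (inv\<^bsub>H\<^esub> (d x)) \<in> carrier \<Gamma>" "e (inv\<^bsub>H\<^esub> (d x)) \<otimes>\<^bsub>\<Gamma>\<^esub> x = \<one>\<^bsub>\<Gamma>\<^esub>"
      using x by (simp_all add: \<Gamma>_def dc de)
    then show "\<exists>y\<in>carrier \<Gamma>. y \<otimes>\<^bsub>\<Gamma>\<^esub> x = \<one>\<^bsub>\<Gamma>\<^esub>" by blast
  qed
  have "e \<in> iso H \<Gamma>"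
    unfolding iso_def hom_def bij_betw_def using inj by (simp add: \<Gamma>_def de)
  then show ?thesis using gr by blast
qed


lemma key_not_in:
  fixes L :: "('a, 'c) monoid_scheme" and g h :: 'a
  assumes grp: "group L"
    and tf: "torsion_free L"
    and fgh: "g \<in> carrier L" "h \<in> carrier L"
    and h1: "h \<noteq> \<one>\<^bsub>L\<^esub>"
    and cyc: "is_cyclic (L\<lparr>carrier := generate L {g, h}\<rparr>) \<Longrightarrow>
              \<exists>n::int. \<bar>n\<bar> > 1 \<and> g = h [^]\<^bsub>L\<^esub> n"
  shows "h \<notin> generate L {g}"
proof
  assume hx: "h \<in> generate L {g}"
  interpret L: group L by (rule grp)
  have sub0: "subgroup (generate L {g,h}) L" using fgh by (intro L.generate_is_subgroup) auto
  have sub1: "subgroup (generate L {g}) L" using fgh by (intro L.generate_is_subgroup) auto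
  have eq: "generate L {g,h} = generate L {g}"
  proof
    show "generate L {g,h} \<subseteq> generate L {g}"
      using hx generate.incl[of g "{g}" L] by (intro L.generate_subgroup_incl[OF _ sub1]) auto
    show "generate L {g} \<subseteq> generate L {g,h}" by (intro L.mono_generate) auto
  qed
  have "is_cyclic (L\<lparr>carrier := generate L {g,h}\<rparr>)"
    unfolding is_cyclic_def
  proof (rule bexI)
    show "g \<in> carrier (L\<lparr>carrier := generate L {g,h}\<rparr>)" using generate.incl[of g "{g,h}" L] by simp
    have "generate (L\<lparr>carrier := generate L {g,h}\<rparr>) {g} = generate L {g}"
      using L.generate_consistent[OF _ sub0, of "{g}"] generate.incl[of g "{g,h}" L] by simp
    then show "generate (L\<lparr>carrier := generate L {g,h}\<rparr>) {g} = carrier (L\<lparr>carrier := generate L {g,h}\<rparr>)"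
      using eq by simp
  qed
  then obtain n :: int where n: "\<bar>n\<bar> > 1" "g = h [^]\<^bsub>L\<^esub> n" using cyc by blast
  obtain k where k: "h = g [^]\<^bsub>L\<^esub> (k::int)" using hx L.generate_pow[of g] fgh by auto
  have hh: "h = h [^]\<^bsub>L\<^esub> (n*k)" using k n L.int_pow_pow fgh by simp
  have p1: "h [^]\<^bsub>L\<^esub> (n*k - 1) = \<one>\<^bsub>L\<^esub>"
    using L.int_pow_diff[of h "n*k" 1] fgh hh[symmetric] by simp
  have nk: "n*k \<noteq> 1"
  proof
    assume "n*k = 1"
    then have "\<bar>n\<bar> * \<bar>k\<bar> = 1" by (metis abs_mult abs_one)
    moreover have "\<bar>k\<bar> \<ge> 1" using \<open>n*k = 1\<close> by (cases "k = 0") auto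
    ultimately show False using n(1)
      by (smt (verit) mult_less_cancel_left2 mult_le_cancel_left1)
  qed
  define z where "z = \<bar>n*k - 1\<bar>"
  have zpos: "z > 0" using nk unfolding z_def by simp
  have pz: "h [^]\<^bsub>L\<^esub> z = \<one>\<^bsub>L\<^esub>"
  proof (cases "n*k - 1 \<ge> 0")
    case True then show ?thesis using p1 unfolding z_def by simp
  next
    case False
    then have "z = - (n*k - 1)" unfolding z_def by simp
    then show ?thesis using p1 L.int_pow_neg[of h "n*k - 1"] fgh by simp
  qed
  have "h [^]\<^bsub>L\<^esub> (nat z) = \<one>\<^bsub>L\<^esub>"
    using pz zpos int_pow_int[of L h "nat z"] by simp
  moreover have "nat z > 0" using zpos by simp
  ultimately show False using tf h1 fgh unfolding torsion_free_def by blast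
qed


theorem lemma3p1:
  fixes L :: "('a, 'c) monoid_scheme" and f g h :: 'a
  assumes grp: "group L"
    and tf: "torsion_free L"
    and fgh: "f \<in> carrier L" "g \<in> carrier L" "h \<in> carrier L"
    and gen: "generate L {f, g, h} = carrier L"
    and fh: "comm L f h \<noteq> \<one>\<^bsub>L\<^esub>"
    and fg: "comm L f g = \<one>\<^bsub>L\<^esub>"
    and Gnt: "generate L {g, h} \<noteq> {\<one>\<^bsub>L\<^esub>}"
    and g1: "g \<noteq> \<one>\<^bsub>L\<^esub>" and h1: "h \<noteq> \<one>\<^bsub>L\<^esub>"
    and cyc: "is_cyclic (L\<lparr>carrier := generate L {g, h}\<rparr>) \<Longrightarrow>
              \<exists>n::int. \<bar>n\<bar> > 1 \<and> g = h [^]\<^bsub>L\<^esub> n"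
  shows "\<exists>(\<Gamma> :: nat monoid) \<phi>. group \<Gamma> \<and> fin_gen \<Gamma> \<and> torsion_free \<Gamma>
           \<and> \<phi> \<in> hom (L\<lparr>carrier := generate L {g, h}\<rparr>) \<Gamma>
           \<and> inj_on \<phi> (generate L {g, h})
           \<and> (\<exists>a\<in>carrier \<Gamma>. \<exists>b\<in>carrier \<Gamma>.
                 a \<noteq> \<one>\<^bsub>\<Gamma>\<^esub> \<and> b \<noteq> \<one>\<^bsub>\<Gamma>\<^esub> \<and> a \<noteq> b
               \<and> a \<otimes>\<^bsub>\<Gamma>\<^esub> \<phi> g = \<phi> g \<otimes>\<^bsub>\<Gamma>\<^esub> a
               \<and> b \<otimes>\<^bsub>\<Gamma>\<^esub> \<phi> g = \<phi> g \<otimes>\<^bsub>\<Gamma>\<^esub> b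
               \<and> comm \<Gamma> a (comm \<Gamma> b (\<phi> h)) \<noteq> \<one>\<^bsub>\<Gamma>\<^esub>
               \<and> comm \<Gamma> a (comm \<Gamma> b (\<phi> h)) \<otimes>\<^bsub>\<Gamma>\<^esub> \<phi> g
                   = \<phi> g \<otimes>\<^bsub>\<Gamma>\<^esub> comm \<Gamma> a (comm \<Gamma> b (\<phi> h)))"
proof -
  interpret L: group L by (rule grp)
  define x0 where "x0 = generate L {g}"
  have hx0: "h \<notin> x0" unfolding x0_def using key_not_in[OF grp tf fgh(2,3) h1 cyc] .
  have x0sub: "subgroup x0 L" unfolding x0_def using fgh by (intro L.generate_is_subgroup) auto
  have gx0: "g \<in> x0" unfolding x0_def by (rule generate.incl) simp
  define Y1 where "Y1 = {S. S \<subseteq> carrier L}"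
  define act1 where "act1 = (\<lambda>x S. (\<lambda>s. x \<otimes>\<^bsub>L\<^esub> s) ` S)"
  interpret w1: wr L Y1 act1
  proof
    fix x y assume "x \<in> carrier L" "y \<in> Y1" then show "act1 x y \<in> Y1" by (auto simp: act1_def Y1_def)
  next
    fix y assume "y \<in> Y1" then show "act1 \<one>\<^bsub>L\<^esub> y = y" by (force simp: act1_def Y1_def)
  next
    fix x z y assume "x \<in> carrier L" "z \<in> carrier L" "y \<in> Y1"
    then show "act1 (x \<otimes>\<^bsub>L\<^esub> z) y = act1 x (act1 z y)"
      unfolding act1_def image_image by (intro image_cong) (auto simp: Y1_def L.m_assoc)
  qed
  have x0Y: "x0 \<in> Y1" using subgroup.subset[OF x0sub] by (simp add: Y1_def)
  have ux0: "act1 u x0 = x0" if u: "u \<in> x0" for u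
  proof
    show "act1 u x0 \<subseteq> x0" using u subgroup.m_closed[OF x0sub] by (auto simp: act1_def)
    show "x0 \<subseteq> act1 u x0"
    proof
      fix s assume s: "s \<in> x0"
      have uc: "u \<in> carrier L" "s \<in> carrier L" using u s subgroup.subset[OF x0sub] by auto
      have "s = u \<otimes>\<^bsub>L\<^esub> (inv\<^bsub>L\<^esub> u \<otimes>\<^bsub>L\<^esub> s)" using uc by (simp add: L.m_assoc[symmetric])
      moreover have "inv\<^bsub>L\<^esub> u \<otimes>\<^bsub>L\<^esub> s \<in> x0"
        using u s subgroup.m_closed[OF x0sub] subgroup.m_inv_closed[OF x0sub] by auto
      ultimately show "s \<in> act1 u x0" unfolding act1_def by blast
    qed
  qed
  have hx0': "act1 h x0 \<noteq> x0"
  proof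
    assume "act1 h x0 = x0"
    moreover have "h \<in> act1 h x0"
      using subgroup.one_closed[OF x0sub] fgh(3) unfolding act1_def by (force intro: image_eqI[of h _ "\<one>\<^bsub>L\<^esub>"])
    ultimately show False using hx0 by simp
  qed
  let ?G1 = "Wr L Y1 act1"
  have G1tf: "torsion_free ?G1" by (rule w1.W_torsion_free[OF tf])
  interpret G1: group ?G1 by (rule w1.W_group)
  interpret w2: wr ?G1 "carrier ?G1" "\<lambda>x p. x \<otimes>\<^bsub>?G1\<^esub> p"
    by unfold_locales (auto simp: G1.m_assoc)
  let ?G2 = "Wr ?G1 (carrier ?G1) (\<lambda>x p. x \<otimes>\<^bsub>?G1\<^esub> p)"
  interpret G2: group ?G2 by (rule w2.W_group)
  have G2tf: "torsion_free ?G2" by (rule w2.W_torsion_free[OF G1tf])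
  define \<delta> :: "'a set \<Rightarrow> int" where "\<delta> = (\<lambda>S. if S = x0 then 1 else 0)"
  define b1 where "b1 = (\<delta>, \<one>\<^bsub>L\<^esub>)"
  have b1c: "b1 \<in> carrier ?G1" using x0Y by (auto simp: b1_def \<delta>_def w1.W_carrier)
  have b1ne: "b1 \<noteq> \<one>\<^bsub>?G1\<^esub>" by (auto simp: b1_def w1.W_one \<delta>_def fun_eq_iff)
  define aF where "aF = (\<lambda>p. if p \<in> carrier ?G1 then fst p x0 else 0)"
  define ah where "ah = (aF, \<one>\<^bsub>?G1\<^esub>)"
  have ahc: "ah \<in> carrier ?G2" by (simp add: ah_def aF_def w2.W_carrier)
  define \<iota> :: "'a \<Rightarrow> (('a set \<Rightarrow> int) \<times> 'a \<Rightarrow> int) \<times> ('a set \<Rightarrow> int) \<times> 'a"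
    where "\<iota> = (\<lambda>x. wi (wi x))"
  have \<iota>c: "\<iota> x \<in> carrier ?G2" if "x \<in> carrier L" for x
    using that by (simp add: \<iota>_def w1.wi_carrier w2.wi_carrier)
  have \<iota>hom: "\<iota> \<in> hom L ?G2"
    by (rule homI) (fact \<iota>c, simp add: \<iota>_def w1.wi_carrier w1.wi_mult w2.wi_mult)
  have \<iota>inj: "inj \<iota>" by (auto simp: inj_def \<iota>_def wi_def)
  define bh :: "(('a set \<Rightarrow> int) \<times> 'a \<Rightarrow> int) \<times> ('a set \<Rightarrow> int) \<times> 'a" where "bh = wi b1"
  have bhc: "bh \<in> carrier ?G2" using b1c by (simp add: bh_def w2.wi_carrier)
  have F1: "ah \<otimes>\<^bsub>?G2\<^esub> \<iota> g = \<iota> g \<otimes>\<^bsub>?G2\<^esub> ah"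
    unfolding ah_def \<iota>_def
  proof (rule w2.W_commute_base)
    show "(aF, \<one>\<^bsub>?G1\<^esub>) \<in> carrier ?G2" using ahc by (simp add: ah_def)
    show "wi g \<in> carrier ?G1" using fgh by (simp add: w1.wi_carrier)
    fix p assume p: "p \<in> carrier ?G1"
    obtain m x where pe: "p = (m,x)" by (cases p)
    have ig: "inv\<^bsub>?G1\<^esub> (wi g) = (\<lambda>S. 0, inv\<^bsub>L\<^esub> g)" using w1.wi_inv[OF fgh(2)] by (simp add: wi_def)
    have "inv\<^bsub>?G1\<^esub> (wi g) \<otimes>\<^bsub>?G1\<^esub> p \<in> carrier ?G1" using p fgh w1.wi_carrier by simp
    moreover have "fst (inv\<^bsub>?G1\<^esub> (wi g) \<otimes>\<^bsub>?G1\<^esub> p) x0 = m x0"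
      using fgh x0Y ux0[OF gx0] by (simp add: ig pe w1.W_mult)
    ultimately show "aF (inv\<^bsub>?G1\<^esub> (wi g) \<otimes>\<^bsub>?G1\<^esub> p) = aF p"
      using p by (simp add: aF_def pe)
  qed
  have b1g: "b1 \<otimes>\<^bsub>?G1\<^esub> wi g = wi g \<otimes>\<^bsub>?G1\<^esub> b1"
    unfolding b1_def
  proof (rule w1.W_commute_base)
    show "(\<delta>, \<one>\<^bsub>L\<^esub>) \<in> carrier ?G1" using b1c by (simp add: b1_def)
    show "g \<in> carrier L" by (rule fgh(2))
    fix S assume S: "S \<in> Y1"
    have ig: "inv\<^bsub>L\<^esub> g \<in> x0" using gx0 subgroup.m_inv_closed[OF x0sub] by simp
    have "act1 (inv\<^bsub>L\<^esub> g) S = x0 \<longleftrightarrow> S = x0"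
    proof
      assume A: "act1 (inv\<^bsub>L\<^esub> g) S = x0"
      have "S = act1 (g \<otimes>\<^bsub>L\<^esub> inv\<^bsub>L\<^esub> g) S" using S fgh w1.act_one by simp
      also have "\<dots> = act1 g (act1 (inv\<^bsub>L\<^esub> g) S)" using S fgh w1.act_mult[of g "inv\<^bsub>L\<^esub> g" S] by simp
      also have "\<dots> = x0" using A ux0[OF gx0] by simp
      finally show "S = x0" .
    next
      assume "S = x0" then show "act1 (inv\<^bsub>L\<^esub> g) S = x0" using ux0[OF ig] by simp
    qed
    then show "\<delta> (act1 (inv\<^bsub>L\<^esub> g) S) = \<delta> S" by (simp add: \<delta>_def)
  qed
  have F2: "bh \<otimes>\<^bsub>?G2\<^esub> \<iota> g = \<iota> g \<otimes>\<^bsub>?G2\<^esub> bh"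
  proof -
    have "bh \<otimes>\<^bsub>?G2\<^esub> \<iota> g = wi (b1 \<otimes>\<^bsub>?G1\<^esub> wi g)"
      unfolding bh_def \<iota>_def using b1c w1.wi_carrier[OF fgh(2)] by (simp add: w2.wi_mult)
    also have "\<dots> = wi (wi g \<otimes>\<^bsub>?G1\<^esub> b1)" using b1g by simp
    also have "\<dots> = \<iota> g \<otimes>\<^bsub>?G2\<^esub> bh"
      unfolding bh_def \<iota>_def using b1c w1.wi_carrier[OF fgh(2)] by (simp add: w2.wi_mult)
    finally show ?thesis .
  qed
  define nF where "nF = (\<lambda>S. if S \<in> Y1 then \<delta> (act1 h S) - \<delta> S else 0)"
  have c1: "comm ?G1 b1 (wi h) = (nF, \<one>\<^bsub>L\<^esub>)"
    unfolding b1_def nF_def using b1c fgh by (intro w1.W_comm_base) (simp_all add: b1_def)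
  have nFc: "(nF, \<one>\<^bsub>L\<^esub>) \<in> carrier ?G1" by (simp add: w1.W_carrier nF_def)
  have c2: "comm ?G2 bh (\<iota> h) = wi (nF, \<one>\<^bsub>L\<^esub>)"
    unfolding bh_def \<iota>_def using w2.wi_comm[OF b1c w1.wi_carrier[OF fgh(3)]] c1 by simp
  define r where "r = (\<lambda>p. if p \<in> carrier ?G1 then -1 else 0 :: int, \<one>\<^bsub>?G1\<^esub>)"
  have rc: "r \<in> carrier ?G2" by (simp add: r_def w2.W_carrier)
  have c3: "comm ?G2 ah (comm ?G2 bh (\<iota> h)) = r"
  proof -
    have "comm ?G2 ah (wi (nF, \<one>\<^bsub>L\<^esub>)) =
        (\<lambda>p. if p \<in> carrier ?G1 then aF ((nF, \<one>\<^bsub>L\<^esub>) \<otimes>\<^bsub>?G1\<^esub> p) - aF p else 0, \<one>\<^bsub>?G1\<^esub>)"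
      unfolding ah_def using ahc nFc by (intro w2.W_comm_base) (simp_all add: ah_def)
    moreover have "aF ((nF, \<one>\<^bsub>L\<^esub>) \<otimes>\<^bsub>?G1\<^esub> p) - aF p = -1" if p: "p \<in> carrier ?G1" for p
    proof -
      obtain m x where pe: "p = (m,x)" by (cases p)
      have "(nF, \<one>\<^bsub>L\<^esub>) \<otimes>\<^bsub>?G1\<^esub> p \<in> carrier ?G1" using nFc p by simp
      moreover have "fst ((nF, \<one>\<^bsub>L\<^esub>) \<otimes>\<^bsub>?G1\<^esub> p) x0 = -1 + m x0"
        using x0Y hx0' w1.act_one[OF x0Y] by (simp add: pe w1.W_mult nF_def \<delta>_def)
      ultimately show ?thesis using p by (simp add: aF_def pe)
    qed
    ultimately show ?thesis using c2 by (simp add: r_def fun_eq_iff)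
  qed
  have F4: "r \<noteq> \<one>\<^bsub>?G2\<^esub>"
  proof
    assume "r = \<one>\<^bsub>?G2\<^esub>"
    then have "fst r \<one>\<^bsub>?G1\<^esub> = 0" by (simp add: w2.W_one)
    then show False by (simp add: r_def)
  qed
  have F5: "r \<otimes>\<^bsub>?G2\<^esub> \<iota> g = \<iota> g \<otimes>\<^bsub>?G2\<^esub> r"
    unfolding r_def \<iota>_def
  proof (rule w2.W_commute_base)
    show "(\<lambda>p. if p \<in> carrier ?G1 then -1 else 0 :: int, \<one>\<^bsub>?G1\<^esub>) \<in> carrier ?G2"
      using rc by (simp add: r_def)
    show "wi g \<in> carrier ?G1" using fgh by (simp add: w1.wi_carrier)
    fix p assume p: "p \<in> carrier ?G1"
    then have "inv\<^bsub>?G1\<^esub> (wi g) \<otimes>\<^bsub>?G1\<^esub> p \<in> carrier ?G1" using fgh w1.wi_carrier by simp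
    then show "(if inv\<^bsub>?G1\<^esub> (wi g) \<otimes>\<^bsub>?G1\<^esub> p \<in> carrier ?G1 then -1 else 0 :: int) =
               (if p \<in> carrier ?G1 then -1 else 0)" using p by simp
  qed
  have F6: "ah \<noteq> \<one>\<^bsub>?G2\<^esub>"
  proof
    assume "ah = \<one>\<^bsub>?G2\<^esub>"
    then have "aF b1 = 0" by (simp add: w2.W_one ah_def)
    then show False using b1c by (simp add: aF_def b1_def \<delta>_def)
  qed
  have F7: "bh \<noteq> \<one>\<^bsub>?G2\<^esub>" using b1ne by (simp add: bh_def wi_def w2.W_one)
  have F8: "ah \<noteq> bh" using b1ne by (simp add: bh_def wi_def ah_def)
  define T where "T = {\<iota> g, \<iota> h, ah, bh}"
  have Tc: "T \<subseteq> carrier ?G2" using \<iota>c fgh ahc bhc by (simp add: T_def)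
  define K where "K = generate ?G2 T"
  have Ksub: "subgroup K ?G2" unfolding K_def using Tc by (rule G2.generate_is_subgroup)
  have TK: "T \<subseteq> K" unfolding K_def using generate.incl[of _ T ?G2] by blast
  have Kcount: "countable K" unfolding K_def
    by (rule generate_countable) (simp add: T_def)
  have Hgrp: "group (?G2\<lparr>carrier := K\<rparr>)" by (rule G2.subgroup_imp_group[OF Ksub])
  obtain \<Gamma> :: "nat monoid" and e where \<Gamma>grp: "group \<Gamma>" and eiso: "e \<in> iso (?G2\<lparr>carrier := K\<rparr>) \<Gamma>"
    using nat_transport[OF Hgrp] Kcount by auto
  interpret \<Gamma>: group \<Gamma> by (rule \<Gamma>grp)
  have ehom: "e \<in> hom (?G2\<lparr>carrier := K\<rparr>) \<Gamma>" using eiso by (simp add: iso_def)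
  interpret eh: group_hom "?G2\<lparr>carrier := K\<rparr>" \<Gamma> e
    by (intro group_hom.intro group_hom_axioms.intro Hgrp \<Gamma>grp ehom)
  have einj: "inj_on e K" and eim: "e ` K = carrier \<Gamma>"
    using eiso by (simp_all add: iso_def bij_betw_def)
  have Kc: "x \<in> K \<Longrightarrow> x \<in> carrier ?G2" for x using subgroup.subset[OF Ksub] by blast
  have emul: "e (x \<otimes>\<^bsub>?G2\<^esub> y) = e x \<otimes>\<^bsub>\<Gamma>\<^esub> e y" if "x \<in> K" "y \<in> K" for x y
    using eh.hom_mult[of x y] that by simp
  have einv: "e (inv\<^bsub>?G2\<^esub> x) = inv\<^bsub>\<Gamma>\<^esub> (e x)" if "x \<in> K" for x
    using eh.hom_inv[of x] that G2.m_inv_consistent[OF Ksub that] by simp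
  have eone: "e \<one>\<^bsub>?G2\<^esub> = \<one>\<^bsub>\<Gamma>\<^esub>" using eh.hom_one by simp
  have Kmul: "x \<otimes>\<^bsub>?G2\<^esub> y \<in> K" if "x \<in> K" "y \<in> K" for x y
    using subgroup.m_closed[OF Ksub] that by blast
  have Kinv: "inv\<^bsub>?G2\<^esub> x \<in> K" if "x \<in> K" for x
    using subgroup.m_inv_closed[OF Ksub] that by blast
  have Kcomm: "comm ?G2 x y \<in> K" if "x \<in> K" "y \<in> K" for x y
    using that by (simp add: comm_def Kmul Kinv)
  have ecomm: "e (comm ?G2 x y) = comm \<Gamma> (e x) (e y)" if "x \<in> K" "y \<in> K" for x y
    using that by (simp add: comm_def Kmul Kinv emul einv)
  have K1: "\<one>\<^bsub>?G2\<^esub> \<in> K" using subgroup.one_closed[OF Ksub] .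
  have ene: "e x \<noteq> \<one>\<^bsub>\<Gamma>\<^esub>" if "x \<in> K" "x \<noteq> \<one>\<^bsub>?G2\<^esub>" for x
    using that K1 einj eone by (metis inj_on_def)
  have ecommute: "e x \<otimes>\<^bsub>\<Gamma>\<^esub> e y = e y \<otimes>\<^bsub>\<Gamma>\<^esub> e x"
    if "x \<in> K" "y \<in> K" "x \<otimes>\<^bsub>?G2\<^esub> y = y \<otimes>\<^bsub>?G2\<^esub> x" for x y
    using that by (simp flip: emul)
  have \<iota>K: "\<iota> ` generate L {g, h} \<subseteq> K"
  proof -
    interpret ih: group_hom L ?G2 \<iota>
      by (intro group_hom.intro group_hom_axioms.intro grp w2.W_group \<iota>hom)
    have "\<iota> ` generate L {g, h} = generate ?G2 (\<iota> ` {g, h})"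
      using ih.generate_img[of "{g,h}"] fgh by simp
    also have "\<dots> \<subseteq> K" unfolding K_def using Tc by (intro G2.mono_generate) (auto simp: T_def)
    finally show ?thesis .
  qed
  have gen_c: "generate L {g, h} \<subseteq> carrier L" using fgh by (intro L.generate_incl) auto
  have gK: "\<iota> g \<in> K" "\<iota> h \<in> K" "ah \<in> K" "bh \<in> K" using TK by (auto simp: T_def)
  have rK: "r \<in> K" using c3 Kcomm gK by metis
  show ?thesis
  proof (intro exI conjI)
    show "group \<Gamma>" by (rule \<Gamma>grp)
    show "torsion_free \<Gamma>" unfolding torsion_free_def
    proof (intro ballI impI allI)
      fix u and n :: nat assume u: "u \<in> carrier \<Gamma>" "u \<noteq> \<one>\<^bsub>\<Gamma>\<^esub>" and n: "n > 0"
      obtain k where k: "k \<in> K" "u = e k" using u eim by blast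
      have k1: "k \<noteq> \<one>\<^bsub>?G2\<^esub>" using k u eone by auto
      have "u [^]\<^bsub>\<Gamma>\<^esub> n = e (k [^]\<^bsub>?G2\<lparr>carrier := K\<rparr>\<^esub> n)" using eh.hom_nat_pow[of k n] k by simp
      also have "k [^]\<^bsub>?G2\<lparr>carrier := K\<rparr>\<^esub> n = k [^]\<^bsub>?G2\<^esub> n" using G2.nat_pow_consistent by simp
      finally have un: "u [^]\<^bsub>\<Gamma>\<^esub> n = e (k [^]\<^bsub>?G2\<^esub> n)" .
      have "k [^]\<^bsub>?G2\<^esub> n \<noteq> \<one>\<^bsub>?G2\<^esub>" using G2tf k k1 n Kc unfolding torsion_free_def by blast
      moreover have "k [^]\<^bsub>?G2\<^esub> n \<in> K" using monoid.nat_pow_closed[OF group.is_monoid[OF Hgrp], of k n] k G2.nat_pow_consistent by simp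
      ultimately show "u [^]\<^bsub>\<Gamma>\<^esub> n \<noteq> \<one>\<^bsub>\<Gamma>\<^esub>" using un ene by simp
    qed
    show "fin_gen \<Gamma>" unfolding fin_gen_def
    proof (intro exI conjI)
      show "finite (e ` T)" by (simp add: T_def)
      show "e ` T \<subseteq> carrier \<Gamma>" using TK eim by blast
      have "generate \<Gamma> (e ` T) = e ` generate (?G2\<lparr>carrier := K\<rparr>) T"
        using eh.generate_img[of T] TK by simp
      also have "generate (?G2\<lparr>carrier := K\<rparr>) T = K"
        using G2.generate_consistent[OF TK Ksub] by (simp add: K_def)
      finally show "generate \<Gamma> (e ` T) = carrier \<Gamma>" using eim by simp
    qed
    show "(\<lambda>x. e (\<iota> x)) \<in> hom (L\<lparr>carrier := generate L {g, h}\<rparr>) \<Gamma>"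
    proof (rule homI)
      fix x assume "x \<in> carrier (L\<lparr>carrier := generate L {g, h}\<rparr>)"
      then show "e (\<iota> x) \<in> carrier \<Gamma>" using \<iota>K eim by auto
    next
      fix x y assume xy: "x \<in> carrier (L\<lparr>carrier := generate L {g, h}\<rparr>)" "y \<in> carrier (L\<lparr>carrier := generate L {g, h}\<rparr>)"
      then have "x \<in> carrier L" "y \<in> carrier L" "\<iota> x \<in> K" "\<iota> y \<in> K" using gen_c \<iota>K by auto
      then show "e (\<iota> (x \<otimes>\<^bsub>L\<lparr>carrier := generate L {g, h}\<rparr>\<^esub> y)) = e (\<iota> x) \<otimes>\<^bsub>\<Gamma>\<^esub> e (\<iota> y)"
        using hom_mult[OF \<iota>hom] by (simp add: emul)
    qed
    show "inj_on (\<lambda>x. e (\<iota> x)) (generate L {g, h})"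
      using einj \<iota>inj \<iota>K unfolding inj_on_def inj_def by blast
    show "\<exists>a\<in>carrier \<Gamma>. \<exists>b\<in>carrier \<Gamma>.
                 a \<noteq> \<one>\<^bsub>\<Gamma>\<^esub> \<and> b \<noteq> \<one>\<^bsub>\<Gamma>\<^esub> \<and> a \<noteq> b
               \<and> a \<otimes>\<^bsub>\<Gamma>\<^esub> e (\<iota> g) = e (\<iota> g) \<otimes>\<^bsub>\<Gamma>\<^esub> a
               \<and> b \<otimes>\<^bsub>\<Gamma>\<^esub> e (\<iota> g) = e (\<iota> g) \<otimes>\<^bsub>\<Gamma>\<^esub> b
               \<and> comm \<Gamma> a (comm \<Gamma> b (e (\<iota> h))) \<noteq> \<one>\<^bsub>\<Gamma>\<^esub>
               \<and> comm \<Gamma> a (comm \<Gamma> b (e (\<iota> h))) \<otimes>\<^bsub>\<Gamma>\<^esub> e (\<iota> g)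
                   = e (\<iota> g) \<otimes>\<^bsub>\<Gamma>\<^esub> comm \<Gamma> a (comm \<Gamma> b (e (\<iota> h)))"
    proof -
      have cc: "comm \<Gamma> (e ah) (comm \<Gamma> (e bh) (e (\<iota> h))) = e r"
        using c3 gK by (simp add: Kcomm flip: ecomm)
      have A1: "e ah \<in> carrier \<Gamma>" "e bh \<in> carrier \<Gamma>" using gK eim by auto
      have A2: "e ah \<noteq> \<one>\<^bsub>\<Gamma>\<^esub>" using ene gK F6 by blast
      have A3: "e bh \<noteq> \<one>\<^bsub>\<Gamma>\<^esub>" using ene gK F7 by blast
      have A4: "e ah \<noteq> e bh" using einj gK F8 unfolding inj_on_def by blast
      have A5: "e ah \<otimes>\<^bsub>\<Gamma>\<^esub> e (\<iota> g) = e (\<iota> g) \<otimes>\<^bsub>\<Gamma>\<^esub> e ah" using ecommute gK F1 by blast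
      have A6: "e bh \<otimes>\<^bsub>\<Gamma>\<^esub> e (\<iota> g) = e (\<iota> g) \<otimes>\<^bsub>\<Gamma>\<^esub> e bh" using ecommute gK F2 by blast
      have A7: "comm \<Gamma> (e ah) (comm \<Gamma> (e bh) (e (\<iota> h))) \<noteq> \<one>\<^bsub>\<Gamma>\<^esub>" using cc ene rK F4 by simp
      have A8: "comm \<Gamma> (e ah) (comm \<Gamma> (e bh) (e (\<iota> h))) \<otimes>\<^bsub>\<Gamma>\<^esub> e (\<iota> g)
          = e (\<iota> g) \<otimes>\<^bsub>\<Gamma>\<^esub> comm \<Gamma> (e ah) (comm \<Gamma> (e bh) (e (\<iota> h)))"
        using cc ecommute rK gK F5 by simp
      show ?thesis
        apply (rule bexI[where x="e ah"], rule bexI[where x="e bh"])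
        using A1 A2 A3 A4 A5 A6 A7 A8 by blast+
    qed
  qed
qed


end
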